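(* Let $n\ge1$, let $\alpha,\beta,c$ be real constants and $F$ a smooth real function of one variable. Consider $$F(p)_{tt}-\alpha p_{ttt}-\beta\,\nabla^2p_t=c^2\nabla^2p$$ for $p(x_1,\dots,x_n,t)$, where $\nabla^2=\sum_{i=1}^n\partial^2/\partial x_i^2$. Let $\phi(x_1,\dots,x_n)$ and $\psi(x_1,\dots,x_n)$ be harmonic functions ($\nabla^2\phi=\nabla^2\psi=0$). Then every smooth solution $p$ satisfies the conservation law $\partial_tT^t+\sum_{i=1}^n\partial_{x_i}T^{x_i}=0$ with $$T^t=(\phi+t\psi)\big(F'(p)p_t-\alpha p_{tt}\big)-\psi\big(F(p)-\alpha p_t\big),$$ $$T^{x_i}=-c^2\big[(\phi+t\psi)p_{x_i}-p(\phi_{x_i}+t\psi_{x_i})\big]-\beta\big[(\phi+t\psi)p_{tx_i}-(\phi_{x_i}+t\psi_{x_i})p_t\big].$$ In particular, for $n\ge2$ the equation has infinitely many conservation laws.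
   Context: Subscripts denote partial derivatives. The corresponding multiplier is $\Lambda=\phi+t\psi$. *)

theory Defs
  imports "HOL-Analysis.Analysis"
begin

text \<open>C-infinity smoothness of a real-valued function on a Euclidean space:
  differentiable everywhere, and every directional derivative is again smooth
  (greatest fixed point, i.e. derivatives of all orders exist).\<close>
coinductive smooth :: "('a::euclidean_space \<Rightarrow> real) \<Rightarrow> bool" where
  "(\<forall>x. f differentiable (at x)) \<Longrightarrow>
   (\<forall>v. smooth (\<lambda>x. frechet_derivative f (at x) v)) \<Longrightarrow> smooth f"

definition pd_t :: "(real^'n \<Rightarrow> real \<Rightarrow> real) \<Rightarrow> real^'n \<Rightarrow> real \<Rightarrow> real" where
  "pd_t f x t = deriv (\<lambda>s. f x s) t"

definition pd_x :: "'n \<Rightarrow> (real^'n \<Rightarrow> real \<Rightarrow> real) \<Rightarrow> real^'n \<Rightarrow> real \<Rightarrow> real" where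
  "pd_x i f x t = deriv (\<lambda>s. f (\<chi> j. if j = i then s else x $ j) t) (x $ i)"

definition pdx :: "'n \<Rightarrow> (real^'n \<Rightarrow> real) \<Rightarrow> real^'n \<Rightarrow> real" where
  "pdx i f x = deriv (\<lambda>s. f (\<chi> j. if j = i then s else x $ j)) (x $ i)"

definition laplacian :: "(real^'n \<Rightarrow> real) \<Rightarrow> real^'n \<Rightarrow> real" where
  "laplacian f x = (\<Sum>i\<in>UNIV. pdx i (pdx i f) x)"

definition laplacian_xt :: "(real^'n \<Rightarrow> real \<Rightarrow> real) \<Rightarrow> real^'n \<Rightarrow> real \<Rightarrow> real" where
  "laplacian_xt f x t = (\<Sum>i\<in>UNIV. pd_x i (pd_x i f) x t)"

definition harmonic :: "(real^'n \<Rightarrow> real) \<Rightarrow> bool" where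
  "harmonic f \<longleftrightarrow> smooth f \<and> (\<forall>x. laplacian f x = 0)"

definition solves_eq :: "(real \<Rightarrow> real) \<Rightarrow> real \<Rightarrow> real \<Rightarrow> real \<Rightarrow> (real^'n \<Rightarrow> real \<Rightarrow> real) \<Rightarrow> bool" where
  "solves_eq F \<alpha> \<beta> c p \<longleftrightarrow>
    (\<forall>x t. pd_t (pd_t (\<lambda>y s. F (p y s))) x t - \<alpha> * pd_t (pd_t (pd_t p)) x t
            - \<beta> * laplacian_xt (pd_t p) x t = c\<^sup>2 * laplacian_xt p x t)"

definition Tt :: "(real \<Rightarrow> real) \<Rightarrow> real \<Rightarrow> (real^'n \<Rightarrow> real) \<Rightarrow> (real^'n \<Rightarrow> real)
    \<Rightarrow> (real^'n \<Rightarrow> real \<Rightarrow> real) \<Rightarrow> real^'n \<Rightarrow> real \<Rightarrow> real" where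
  "Tt F \<alpha> \<phi> \<psi> p x t =
     (\<phi> x + t * \<psi> x) * (deriv F (p x t) * pd_t p x t - \<alpha> * pd_t (pd_t p) x t)
     - \<psi> x * (F (p x t) - \<alpha> * pd_t p x t)"

definition Tx :: "real \<Rightarrow> real \<Rightarrow> (real^'n \<Rightarrow> real) \<Rightarrow> (real^'n \<Rightarrow> real)
    \<Rightarrow> (real^'n \<Rightarrow> real \<Rightarrow> real) \<Rightarrow> 'n \<Rightarrow> real^'n \<Rightarrow> real \<Rightarrow> real" where
  "Tx \<beta> c \<phi> \<psi> p i x t =
     - c\<^sup>2 * ((\<phi> x + t * \<psi> x) * pd_x i p x t - p x t * (pdx i \<phi> x + t * pdx i \<psi> x))
     - \<beta> * ((\<phi> x + t * \<psi> x) * pd_x i (pd_t p) x t - (pdx i \<phi> x + t * pdx i \<psi> x) * pd_t p x t)"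

end

theory Submission
  imports Defs
begin


lemma smooth_diff: "smooth f \<Longrightarrow> f differentiable (at x)"
  by (erule smooth.cases) auto

lemma smooth_D: "smooth f \<Longrightarrow> smooth (\<lambda>x. frechet_derivative f (at x) v)"
  by (erule smooth.cases) auto

lemma line_deriv: "((\<lambda>s. (\<chi> j. if j = i then s else x $ j) :: real^'n) has_derivative (\<lambda>h. h *\<^sub>R axis i 1)) (at s)"
proof -
  have e: "(\<lambda>s. (\<chi> j. if j = i then s else x $ j) :: real^'n) = (\<lambda>s. (\<chi> j. if j = i then 0 else x $ j) + s *\<^sub>R axis i 1)"
    by (auto simp: vec_eq_iff axis_def)
  show ?thesis unfolding e by (auto intro!: derivative_eq_intros)
qed

lemma line_at: "(\<chi> j. if j = i then x $ i else x $ j) = (x::real^'n)"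
  by (auto simp: vec_eq_iff)

lemma fd_lin: assumes "f differentiable (at x)"
  shows "frechet_derivative f (at x) (h *\<^sub>R v) = h *\<^sub>R frechet_derivative f (at x) v"
proof -
  have "linear (frechet_derivative f (at x))"
    using assms frechet_derivative_works has_derivative_linear by blast
  then show ?thesis by (simp add: linear_scale)
qed

lemma pdx_deriv:
  fixes f :: "real^'n \<Rightarrow> real"
  assumes "f differentiable (at x)"
  shows "((\<lambda>s. f (\<chi> j. if j = i then s else x $ j)) has_real_derivative frechet_derivative f (at x) (axis i 1)) (at (x$i))"
proof -
  have d0: "(f has_derivative frechet_derivative f (at x)) (at x)"
    using assms frechet_derivative_works by blast
  have d: "(f has_derivative frechet_derivative f (at x)) (at ((\<chi> j. if j = i then x$i else x $ j)::real^'n))"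
    by (subst line_at) (rule d0)
  have "((f \<circ> (\<lambda>s. (\<chi> j. if j = i then s else x $ j))) has_derivative (frechet_derivative f (at x) \<circ> (\<lambda>h. h *\<^sub>R axis i 1))) (at (x$i))"
    by (rule diff_chain_at[OF line_deriv d])
  moreover have "(frechet_derivative f (at x) \<circ> (\<lambda>h. h *\<^sub>R axis i 1)) = (\<lambda>h. frechet_derivative f (at x) (axis i 1) * h)"
    by (rule ext) (simp add: o_def fd_lin[OF assms])
  ultimately show ?thesis unfolding has_field_derivative_def o_def by (simp only:)
qed

lemma pdx_eq: "f differentiable (at x) \<Longrightarrow> pdx i f x = frechet_derivative f (at x) (axis i 1)"
  unfolding pdx_def by (rule DERIV_imp_deriv[OF pdx_deriv])

lemma pdx_fun: "smooth f \<Longrightarrow> pdx i f = (\<lambda>x. frechet_derivative f (at x) (axis i 1))"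
  by (rule ext) (rule pdx_eq[OF smooth_diff])

lemma smooth_pdx: "smooth f \<Longrightarrow> smooth (pdx i f)"
  unfolding pdx_fun[of f i] by (rule smooth_D)

lemma smooth_pdx_deriv: "smooth f \<Longrightarrow> ((\<lambda>s. f (\<chi> j. if j = i then s else x $ j)) has_real_derivative pdx i f x) (at (x$i))"
  unfolding pdx_eq[OF smooth_diff] by (rule pdx_deriv[OF smooth_diff])

definition sm :: "(real^'n \<Rightarrow> real \<Rightarrow> real) \<Rightarrow> bool" where
  "sm q \<longleftrightarrow> smooth (\<lambda>z. q (fst z) (snd z))"

lemma pdt_deriv:
  fixes g :: "(real^'n) \<times> real \<Rightarrow> real"
  assumes "g differentiable (at (x,t))"
  shows "((\<lambda>s. g (x, s)) has_real_derivative frechet_derivative g (at (x,t)) (0,1)) (at t)"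
proof -
  have d: "(g has_derivative frechet_derivative g (at (x,t))) (at (x,t))"
    using assms frechet_derivative_works by blast
  have l: "((\<lambda>s. (x,s)) has_derivative (\<lambda>h. (0,h))) (at t)"
    by (auto intro!: derivative_eq_intros)
  have "((g \<circ> (\<lambda>s. (x,s))) has_derivative (frechet_derivative g (at (x,t)) \<circ> (\<lambda>h. (0,h)))) (at t)"
    by (rule diff_chain_at[OF l]) (simp add: d)
  moreover have "(frechet_derivative g (at (x,t)) \<circ> (\<lambda>h. (0,h))) = (\<lambda>h. frechet_derivative g (at (x,t)) (0,1) * h)"
  proof
    fix h :: real
    have "frechet_derivative g (at (x,t)) (0, h) = frechet_derivative g (at (x,t)) (h *\<^sub>R (0, 1))" by simp
    also have "\<dots> = h *\<^sub>R frechet_derivative g (at (x,t)) (0, 1)" by (rule fd_lin[OF assms])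
    finally show "(frechet_derivative g (at (x,t)) \<circ> (\<lambda>h. (0,h))) h = frechet_derivative g (at (x,t)) (0,1) * h"
      by simp
  qed
  ultimately show ?thesis unfolding has_field_derivative_def o_def by (simp only:)
qed

lemma pdxt_deriv:
  fixes g :: "(real^'n) \<times> real \<Rightarrow> real"
  assumes "g differentiable (at (x,t))"
  shows "((\<lambda>s. g ((\<chi> j. if j = i then s else x $ j), t)) has_real_derivative frechet_derivative g (at (x,t)) (axis i 1, 0)) (at (x$i))"
proof -
  have d0: "(g has_derivative frechet_derivative g (at (x,t))) (at (x,t))"
    using assms frechet_derivative_works by blast
  have d: "(g has_derivative frechet_derivative g (at (x,t))) (at ((\<chi> j. if j = i then x$i else x $ j)::real^'n, t))"
    by (subst line_at) (rule d0)
  have l: "((\<lambda>s. ((\<chi> j. if j = i then s else x $ j)::real^'n, t)) has_derivative (\<lambda>h. (h *\<^sub>R axis i 1, 0))) (at (x$i))"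
    by (auto intro!: derivative_eq_intros line_deriv)
  have "((g \<circ> (\<lambda>s. ((\<chi> j. if j = i then s else x $ j)::real^'n, t))) has_derivative (frechet_derivative g (at (x,t)) \<circ> (\<lambda>h. (h *\<^sub>R axis i 1, 0)))) (at (x$i))"
    by (rule diff_chain_at[OF l]) (simp add: d)
  moreover have "(frechet_derivative g (at (x,t)) \<circ> (\<lambda>h. (h *\<^sub>R axis i 1, 0))) = (\<lambda>h. frechet_derivative g (at (x,t)) (axis i 1, 0) * h)"
  proof
    fix h :: real
    have "frechet_derivative g (at (x,t)) (h *\<^sub>R axis i 1, 0) = frechet_derivative g (at (x,t)) (h *\<^sub>R (axis i 1, 0))" by simp
    also have "\<dots> = h *\<^sub>R frechet_derivative g (at (x,t)) (axis i 1, 0)" by (rule fd_lin[OF assms])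
    finally show "(frechet_derivative g (at (x,t)) \<circ> (\<lambda>h. (h *\<^sub>R axis i 1, 0))) h = frechet_derivative g (at (x,t)) (axis i 1, 0) * h"
      by simp
  qed
  ultimately show ?thesis unfolding has_field_derivative_def o_def by (simp only:)
qed

lemma sm_pdt_deriv0: assumes "sm q" shows "((\<lambda>s. q x s) has_real_derivative frechet_derivative (\<lambda>z. q (fst z) (snd z)) (at (x,t)) (0,1)) (at t)"
proof -
  have "smooth (\<lambda>z. q (fst z) (snd z))" using assms unfolding sm_def .
  from pdt_deriv[OF smooth_diff[OF this]] show ?thesis by simp
qed

lemma sm_pdt_fun: "sm q \<Longrightarrow> pd_t q = (\<lambda>x s. frechet_derivative (\<lambda>z. q (fst z) (snd z)) (at (x,s)) (0,1))"
  unfolding pd_t_def by (intro ext DERIV_imp_deriv sm_pdt_deriv0)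

lemma sm_pdt_deriv: "sm q \<Longrightarrow> ((\<lambda>s. q x s) has_real_derivative pd_t q x t) (at t)"
  by (simp only: sm_pdt_fun sm_pdt_deriv0)

lemma sm_pdt: assumes "sm q" shows "sm (pd_t q)"
proof -
  have "smooth (\<lambda>z. q (fst z) (snd z))" using assms unfolding sm_def .
  from smooth_D[OF this, of "(0,1)"] show ?thesis
    by (simp only: sm_def sm_pdt_fun[OF assms] prod.collapse)
qed

lemma sm_pdx_deriv0: assumes "sm q" shows "((\<lambda>s. q (\<chi> j. if j = i then s else x $ j) t) has_real_derivative frechet_derivative (\<lambda>z. q (fst z) (snd z)) (at (x,t)) (axis i 1, 0)) (at (x$i))"
proof -
  have "smooth (\<lambda>z. q (fst z) (snd z))" using assms unfolding sm_def .
  from pdxt_deriv[OF smooth_diff[OF this]] show ?thesis by simp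
qed

lemma sm_pdx_fun: "sm q \<Longrightarrow> pd_x i q = (\<lambda>x s. frechet_derivative (\<lambda>z. q (fst z) (snd z)) (at (x,s)) (axis i 1, 0))"
  unfolding pd_x_def by (intro ext DERIV_imp_deriv sm_pdx_deriv0)

lemma sm_pdx_deriv: "sm q \<Longrightarrow> ((\<lambda>s. q (\<chi> j. if j = i then s else x $ j) t) has_real_derivative pd_x i q x t) (at (x$i))"
  by (simp only: sm_pdx_fun sm_pdx_deriv0)

lemma sm_pdx: assumes "sm q" shows "sm (pd_x i q)"
proof -
  have "smooth (\<lambda>z. q (fst z) (snd z))" using assms unfolding sm_def .
  from smooth_D[OF this, of "(axis i 1, 0)"] show ?thesis
    by (simp only: sm_def sm_pdx_fun[OF assms] prod.collapse)
qed



lemma F_deriv0: assumes "(F::real\<Rightarrow>real) differentiable (at y)"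
  shows "(F has_real_derivative frechet_derivative F (at y) 1) (at y)"
proof -
  have d: "(F has_derivative frechet_derivative F (at y)) (at y)"
    using assms frechet_derivative_works by blast
  have "frechet_derivative F (at y) = (\<lambda>h. frechet_derivative F (at y) 1 * h)"
  proof
    fix h :: real
    have "frechet_derivative F (at y) h = frechet_derivative F (at y) (h *\<^sub>R 1)" by simp
    also have "\<dots> = h *\<^sub>R frechet_derivative F (at y) 1" by (rule fd_lin[OF assms])
    finally show "frechet_derivative F (at y) h = frechet_derivative F (at y) 1 * h" by simp
  qed
  with d show ?thesis unfolding has_field_derivative_def by (simp only:)
qed

lemma F_deriv_fun: "smooth (F::real\<Rightarrow>real) \<Longrightarrow> deriv F = (\<lambda>y. frechet_derivative F (at y) 1)"
  by (intro ext DERIV_imp_deriv F_deriv0 smooth_diff)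

lemma F_deriv: "smooth (F::real\<Rightarrow>real) \<Longrightarrow> (F has_real_derivative deriv F y) (at y)"
  by (simp only: F_deriv_fun F_deriv0 smooth_diff)

lemma smooth_deriv: "smooth (F::real\<Rightarrow>real) \<Longrightarrow> smooth (deriv F)"
  by (simp only: F_deriv_fun smooth_D)

lemma DERIV_eq: "(f has_real_derivative a) F \<Longrightarrow> a = b \<Longrightarrow> (f has_real_derivative b) F"
  by simp

lemma part1:
  fixes F :: "real \<Rightarrow> real" and \<alpha> \<beta> c :: real
    and \<phi> \<psi> :: "real^'n \<Rightarrow> real" and p :: "real^'n \<Rightarrow> real \<Rightarrow> real"
  assumes sF: "smooth F" and h\<phi>: "harmonic \<phi>" and h\<psi>: "harmonic \<psi>"
    and sp: "sm p" and eq: "solves_eq F \<alpha> \<beta> c p"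
  shows "pd_t (Tt F \<alpha> \<phi> \<psi> p) x t + (\<Sum>i\<in>UNIV. pd_x i (Tx \<beta> c \<phi> \<psi> p i) x t) = 0"
proof -
  define dF where "dF = deriv F"
  define ddF where "ddF = deriv dF"
  have sdF: "smooth dF" unfolding dF_def by (rule smooth_deriv[OF sF])
  have spt: "sm (pd_t p)" by (rule sm_pdt[OF sp])
  have sptt: "sm (pd_t (pd_t p))" by (rule sm_pdt[OF spt])
  have d1: "\<And>y s. ((\<lambda>s. p y s) has_real_derivative pd_t p y s) (at s)" by (rule sm_pdt_deriv[OF sp])
  have d2: "((\<lambda>s. pd_t p x s) has_real_derivative pd_t (pd_t p) x t) (at t)" by (rule sm_pdt_deriv[OF spt])
  have d3: "((\<lambda>s. pd_t (pd_t p) x s) has_real_derivative pd_t (pd_t (pd_t p)) x t) (at t)" by (rule sm_pdt_deriv[OF sptt])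
  have dF1: "\<And>y s. ((\<lambda>s. F (p y s)) has_real_derivative dF (p y s) * pd_t p y s) (at s)"
    unfolding dF_def by (rule DERIV_chain2[OF F_deriv[OF sF] d1])
  have dF2: "((\<lambda>s. dF (p x s)) has_real_derivative ddF (p x t) * pd_t p x t) (at t)"
    unfolding ddF_def by (rule DERIV_chain2[OF F_deriv[OF sdF] d1])
  have Fp: "pd_t (\<lambda>y s. F (p y s)) = (\<lambda>y s. dF (p y s) * pd_t p y s)"
    unfolding pd_t_def[of "\<lambda>y s. F (p y s)"] by (intro ext DERIV_imp_deriv dF1)
  define V where "V = ddF (p x t) * pd_t p x t * pd_t p x t + dF (p x t) * pd_t (pd_t p) x t"
  have hv: "((\<lambda>s. dF (p x s) * pd_t p x s) has_real_derivative V) (at t)"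
    using DERIV_mult[OF dF2 d2] by (simp add: V_def algebra_simps)
  have FTT: "pd_t (pd_t (\<lambda>y s. F (p y s))) x t = V"
    unfolding Fp pd_t_def[of "\<lambda>y s. dF (p y s) * pd_t p y s"] by (rule DERIV_imp_deriv[OF hv])
  have hT: "((\<lambda>s. Tt F \<alpha> \<phi> \<psi> p x s) has_real_derivative (\<phi> x + t * \<psi> x) * (V - \<alpha> * pd_t (pd_t (pd_t p)) x t)) (at t)"
    unfolding Tt_def dF_def[symmetric]
    apply (rule DERIV_eq)
     apply (rule derivative_eq_intros hv d1 d2 d3 dF1 dF2 refl)+
    apply (simp add: V_def algebra_simps)
    done
  have s\<phi>: "smooth \<phi>" and l\<phi>: "\<And>y. laplacian \<phi> y = 0" using h\<phi> unfolding harmonic_def by auto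
  have s\<psi>: "smooth \<psi>" and l\<psi>: "\<And>y. laplacian \<psi> y = 0" using h\<psi> unfolding harmonic_def by auto
  have hX: "pd_x i (Tx \<beta> c \<phi> \<psi> p i) x t = - c\<^sup>2 * ((\<phi> x + t*\<psi> x) * pd_x i (pd_x i p) x t - p x t * (pdx i (pdx i \<phi>) x + t * pdx i (pdx i \<psi>) x)) - \<beta> * ((\<phi> x + t*\<psi> x) * pd_x i (pd_x i (pd_t p)) x t - (pdx i (pdx i \<phi>) x + t * pdx i (pdx i \<psi>) x) * pd_t p x t)" for i
  proof -
    note e1 = smooth_pdx_deriv[OF s\<phi>, where i=i and x=x]
    note e2 = smooth_pdx_deriv[OF smooth_pdx[OF s\<phi>], where i=i and x=x]
    note e3 = smooth_pdx_deriv[OF s\<psi>, where i=i and x=x]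
    note e4 = smooth_pdx_deriv[OF smooth_pdx[OF s\<psi>], where i=i and x=x]
    note q1 = sm_pdx_deriv[OF sp, where i=i and x=x and t=t]
    note q2 = sm_pdx_deriv[OF sm_pdx[OF sp], where i=i and x=x and t=t]
    note q3 = sm_pdx_deriv[OF spt, where i=i and x=x and t=t]
    note q4 = sm_pdx_deriv[OF sm_pdx[OF spt], where i=i and x=x and t=t]
    have "((\<lambda>s. Tx \<beta> c \<phi> \<psi> p i (\<chi> j. if j = i then s else x $ j) t) has_real_derivative - c\<^sup>2 * ((\<phi> x + t*\<psi> x) * pd_x i (pd_x i p) x t - p x t * (pdx i (pdx i \<phi>) x + t * pdx i (pdx i \<psi>) x)) - \<beta> * ((\<phi> x + t*\<psi> x) * pd_x i (pd_x i (pd_t p)) x t - (pdx i (pdx i \<phi>) x + t * pdx i (pdx i \<psi>) x) * pd_t p x t)) (at (x$i))"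
      unfolding Tx_def
      apply (rule DERIV_eq)
       apply (rule derivative_eq_intros e1 e2 e3 e4 q1 q2 q3 q4 refl)+
      apply (simp add: line_at algebra_simps)
      done
    then show ?thesis unfolding pd_x_def[of i "Tx \<beta> c \<phi> \<psi> p i"] by (rule DERIV_imp_deriv)
  qed
  have S: "(\<Sum>i\<in>UNIV. pd_x i (Tx \<beta> c \<phi> \<psi> p i) x t) = - c\<^sup>2 * ((\<phi> x + t*\<psi> x) * laplacian_xt p x t - p x t * (laplacian \<phi> x + t * laplacian \<psi> x)) - \<beta> * ((\<phi> x + t*\<psi> x) * laplacian_xt (pd_t p) x t - (laplacian \<phi> x + t * laplacian \<psi> x) * pd_t p x t)"
    unfolding hX laplacian_xt_def laplacian_def
    by (simp add: sum.distrib sum_subtractf sum_negf sum_distrib_left sum_distrib_right algebra_simps)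
  have E: "V - \<alpha> * pd_t (pd_t (pd_t p)) x t - \<beta> * laplacian_xt (pd_t p) x t = c\<^sup>2 * laplacian_xt p x t"
    using eq unfolding solves_eq_def FTT[symmetric] by blast
  have T: "pd_t (Tt F \<alpha> \<phi> \<psi> p) x t = (\<phi> x + t * \<psi> x) * (V - \<alpha> * pd_t (pd_t (pd_t p)) x t)"
    unfolding pd_t_def[of "Tt F \<alpha> \<phi> \<psi> p"] by (rule DERIV_imp_deriv[OF hT])
  have "pd_t (Tt F \<alpha> \<phi> \<psi> p) x t + (\<Sum>i\<in>UNIV. pd_x i (Tx \<beta> c \<phi> \<psi> p i) x t)
     = (\<phi> x + t * \<psi> x) * (V - \<alpha> * pd_t (pd_t (pd_t p)) x t - \<beta> * laplacian_xt (pd_t p) x t - c\<^sup>2 * laplacian_xt p x t)"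
    unfolding T S l\<phi> l\<psi> by (simp add: algebra_simps)
  then show ?thesis using E by simp
qed



definition Zc :: "'n \<Rightarrow> 'n \<Rightarrow> real^'n \<Rightarrow> complex" where
  "Zc a b x = Complex (x$a) (x$b)"

definition Gh :: "'n \<Rightarrow> 'n \<Rightarrow> complex \<Rightarrow> nat \<Rightarrow> real^'n \<Rightarrow> real" where
  "Gh a b w m x = Re (w * Zc a b x ^ m)"

lemma Zc_alt: "Zc a b = (\<lambda>x. complex_of_real (x$a) + \<i> * complex_of_real (x$b))"
  by (auto simp: Zc_def complex_eq_iff)

lemma Zc_lin: "bounded_linear (Zc a b)"
proof -
  have "linear (Zc a b)" by (rule linearI) (simp_all add: Zc_def complex_eq_iff)
  then show ?thesis by (simp add: linear_conv_bounded_linear)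
qed

lemma Gh_deriv: "(Gh a b w m has_derivative (\<lambda>v. Re (w * of_nat m * Zc a b x ^ (m - 1) * Zc a b v))) (at x)"
proof -
  have z: "(Zc a b has_derivative Zc a b) (at x)" by (rule bounded_linear_imp_has_derivative[OF Zc_lin])
  have "((\<lambda>x. w * Zc a b x ^ m) has_derivative (\<lambda>v. w * of_nat m * Zc a b x ^ (m - 1) * Zc a b v)) (at x)"
    apply (rule has_derivative_eq_rhs)
     apply (rule derivative_eq_intros z refl)+
    apply (auto simp: algebra_simps)
    done
  from bounded_linear.has_derivative[OF bounded_linear_Re this] show ?thesis
    unfolding Gh_def by simp
qed

lemma Gh_fd: "frechet_derivative (Gh a b w m) (at x) v = Gh a b (w * of_nat m * Zc a b v) (m - 1) x"
proof -
  have e: "(\<lambda>v. Re (w * of_nat m * Zc a b x ^ (m - 1) * Zc a b v)) = frechet_derivative (Gh a b w m) (at x)"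
    by (rule frechet_derivative_at[OF Gh_deriv])
  have c: "w * of_nat m * Zc a b x ^ (m - 1) * Zc a b v = w * of_nat m * Zc a b v * Zc a b x ^ (m - 1)"
    by (simp only: ac_simps)
  show ?thesis unfolding e[symmetric] Gh_def c ..
qed

lemma Gh_smooth: "smooth (Gh a b w m)"
proof -
  have "\<exists>w m. f = Gh a b w m \<Longrightarrow> smooth f" for f
  proof (coinduction arbitrary: f rule: smooth.coinduct)
    case smooth
    then obtain w m where f: "f = Gh a b w m" by blast
    have d: "\<forall>x. Gh a b w m differentiable at x" using Gh_deriv by (blast intro: differentiableI)
    have e: "\<forall>v. (\<lambda>x. frechet_derivative (Gh a b w m) (at x) v) = Gh a b (w * of_nat m * Zc a b v) (m - 1)"
      by (intro allI ext) (rule Gh_fd)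
    show ?case unfolding f using d e by blast
  qed
  then show ?thesis by blast
qed

lemma Gh_pdx: "pdx i (Gh a b w m) = Gh a b (w * of_nat m * Zc a b (axis i 1)) (m - 1)"
  by (simp only: pdx_fun[OF Gh_smooth] Gh_fd)

lemma Zsq: assumes "a \<noteq> b"
  shows "(Zc a b (axis i 1))\<^sup>2 = (if i = a then 1 else 0) + (if i = b then -1 else 0)"
  using assms by (auto simp: Zc_def axis_def complex_eq_iff power2_eq_square)

lemma Gh_harmonic: assumes "a \<noteq> b" shows "harmonic (Gh a b w m)"
  unfolding harmonic_def
proof (intro conjI allI Gh_smooth)
  fix x
  have "laplacian (Gh a b w m) x = (\<Sum>i\<in>UNIV. Re (w * of_nat m * of_nat (m - 1) * Zc a b x ^ (m - 1 - 1) * (Zc a b (axis i 1))\<^sup>2))"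
    unfolding laplacian_def Gh_pdx Gh_def by (intro sum.cong refl) (simp add: power2_eq_square ac_simps)
  also have "\<dots> = Re (w * of_nat m * of_nat (m - 1) * Zc a b x ^ (m - 1 - 1) * (\<Sum>i\<in>UNIV. (Zc a b (axis i 1))\<^sup>2))"
    by (simp add: Re_sum sum_distrib_left)
  also have "(\<Sum>i\<in>UNIV. (Zc a b (axis i 1))\<^sup>2) = 0"
    unfolding Zsq[OF assms] by (simp add: sum.distrib)
  finally show "laplacian (Gh a b w m) x = 0" by simp
qed

lemma part2:
  assumes "CARD('n) \<ge> 2"
  shows "\<forall>N::nat. \<exists>h :: nat \<Rightarrow> real^'n \<Rightarrow> real. (\<forall>k<N. harmonic (h k)) \<and>
              (\<forall>a :: nat \<Rightarrow> real. (\<forall>x. (\<Sum>k<N. a k * h k x) = 0) \<longrightarrow> (\<forall>k<N. a k = 0))"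
proof
  fix N :: nat
  obtain a :: 'n where True by blast
  have "\<exists>b::'n. b \<noteq> a"
  proof (rule ccontr)
    assume "\<not> (\<exists>b::'n. b \<noteq> a)"
    then have "(UNIV :: 'n set) = {a}" by auto
    then have "CARD('n) = card {a}" by (simp only:)
    then have "CARD('n) = 1" by simp
    with assms show False by simp
  qed
  then obtain b :: 'n where ab: "b \<noteq> a" by blast
  show "\<exists>h :: nat \<Rightarrow> real^'n \<Rightarrow> real. (\<forall>k<N. harmonic (h k)) \<and>
              (\<forall>c :: nat \<Rightarrow> real. (\<forall>x. (\<Sum>k<N. c k * h k x) = 0) \<longrightarrow> (\<forall>k<N. c k = 0))"
  proof (intro exI conjI allI impI)
    show "harmonic (Gh a b 1 k)" for k using ab by (intro Gh_harmonic) simp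
  next
    fix c :: "nat \<Rightarrow> real" and k
    assume H: "\<forall>x. (\<Sum>k<N. c k * Gh a b 1 k x) = 0" and k: "k < N"
    have P: "(\<Sum>k<N. c k * s ^ k) = 0" for s :: real
    proof -
      define y :: "real^'n" where "y = (\<chi> j. if j = a then s else 0)"
      have "Zc a b y = complex_of_real s" using ab by (simp add: Zc_def y_def complex_eq_iff)
      then have "Gh a b 1 k' y = s ^ k'" for k' by (simp add: Gh_def)
      then show ?thesis using H[rule_format, of y] by simp
    qed
    from k obtain M where N: "N = Suc M" by (cases N) auto
    have P': "(\<Sum>i\<le>M. c i * s ^ i) = 0" for s :: real using P[of s] unfolding N lessThan_Suc_atMost .
    show "c k = 0" by (rule zero_polynom_imp_zero_coeffs[OF P']) (use k N in simp)
  qed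
qed

theorem mainTheorem6:
  fixes F :: "real \<Rightarrow> real" and \<alpha> \<beta> c :: real
    and \<phi> \<psi> :: "real^'n \<Rightarrow> real"
  assumes "smooth F" and "harmonic \<phi>" and "harmonic \<psi>"
  shows "(\<forall>p :: real^'n \<Rightarrow> real \<Rightarrow> real.
            smooth (\<lambda>z. p (fst z) (snd z)) \<and> solves_eq F \<alpha> \<beta> c p \<longrightarrow>
            (\<forall>x t. pd_t (Tt F \<alpha> \<phi> \<psi> p) x t + (\<Sum>i\<in>UNIV. pd_x i (Tx \<beta> c \<phi> \<psi> p i) x t) = 0))
     \<and> (CARD('n) \<ge> 2 \<longrightarrow>
          (\<forall>N::nat. \<exists>h :: nat \<Rightarrow> real^'n \<Rightarrow> real. (\<forall>k<N. harmonic (h k)) \<and>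
              (\<forall>a :: nat \<Rightarrow> real. (\<forall>x. (\<Sum>k<N. a k * h k x) = 0) \<longrightarrow> (\<forall>k<N. a k = 0))))"
proof (rule conjI)
  show "\<forall>p :: real^'n \<Rightarrow> real \<Rightarrow> real.
            smooth (\<lambda>z. p (fst z) (snd z)) \<and> solves_eq F \<alpha> \<beta> c p \<longrightarrow>
            (\<forall>x t. pd_t (Tt F \<alpha> \<phi> \<psi> p) x t + (\<Sum>i\<in>UNIV. pd_x i (Tx \<beta> c \<phi> \<psi> p i) x t) = 0)"
    using part1[OF assms] unfolding sm_def by blast
  show "CARD('n) \<ge> 2 \<longrightarrow>
          (\<forall>N::nat. \<exists>h :: nat \<Rightarrow> real^'n \<Rightarrow> real. (\<forall>k<N. harmonic (h k)) \<and>
              (\<forall>a :: nat \<Rightarrow> real. (\<forall>x. (\<Sum>k<N. a k * h k x) = 0) \<longrightarrow> (\<forall>k<N. a k = 0)))"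
    using part2 by blast
qed

end
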